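(* Let $(x(t),v(t))$, $t\in[0,T]$, be the trajectory generated by an optimal control $f^*\in\mathcal F$ of the problem $\mathcal Q_N(0,T,x_0,v_0)$, and write $f^*(t)=(f^*(t,x_1(t),v_1(t)),\dots,f^*(t,x_N(t),v_N(t)))$. Then for every $a\in[0,T]$, $$\int_a^T \|v(t)-\bar v\|_N^2+\lambda\|f^*(t)\|_N^2\,dt\;\le\;\sqrt{\lambda}\,\|v(a)-\bar v\|_N^2 .$$
   Context: Fix integers $D\ge1$, $N\ge1$, a horizon $T>0$, a weight $\lambda>0$ and a target velocity $\bar v\in\mathbb R^D$. The interaction kernel $\Psi:\mathbb R^D\times\mathbb R^D\to\mathbb R$ is Lipschitz continuous, symmetric ($\Psi(x,y)=\Psi(y,x)$), nonnegative and bounded ($0\le\Psi\le C_\Psi$). The admissible control set $\mathcal F$ consists of Carathéodory functions $f:[0,T]\times\mathbb R^{2D}\to\mathbb R^D$ with $f(t,\cdot)\in W^{1,\infty}_{loc}(\mathbb R^{2D})$ and $|f(t,0)|+\|f(t,\cdot)\|_{Lip}\le C_B$ for a.e. $t$, where the constant $C_B$ is assumed large enough ($C_B\ge\lambda^{-1/2}(1+|\bar v|)$) that the linear feedback $(x,v)\mapsto-\lambda^{-1/2}(v-\bar v)$ is admissible; admissible controls on a subinterval $[a,T]$ are defined analogously. Given $f\in\mathcal F$ and initial data $x_0=(x_{10},\dots,x_{N0})$, $v_0=(v_{10},\dots,v_{N0})\in(\mathbb R^D)^N$, the state $x(t)=(x_i(t))_{i=1}^N$, $v(t)=(v_i(t))_{i=1}^N$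 solves $\dot x_i=v_i$, $\dot v_i=\frac1N\sum_{j=1}^N\Psi(x_i,x_j)(v_j-v_i)+f_i(t)$, with $f_i(t):=f(t,x_i(t),v_i(t))$, $x_i(0)=x_{i0}$, $v_i(0)=v_{i0}$. For $w=(w_1,\dots,w_N)\in(\mathbb R^D)^N$ set $\|w\|_N^2=\frac1N\sum_{i=1}^N|w_i|^2$, and write $\|v-\bar v\|_N^2=\frac1N\sum_i|v_i-\bar v|^2$, $f(t)=(f_1(t),\dots,f_N(t))$. The problem $\mathcal Q_N(0,T,x_0,v_0)$ is to minimize $J_N(f)=\int_0^T\|v(t)-\bar v\|_N^2+\lambda\|f(t)\|_N^2\,dt$ over $f\in\mathcal F$; a minimizer is an optimal control and its trajectory the optimal solution. The problem $\mathcal Q_N(a,T,x(a),v(a))$ on $[a,T]$ with data at time $a$ is defined analogously. *)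

theory Defs
  imports "HOL-Analysis.Analysis"
begin

definition sqnormN :: "nat \<Rightarrow> (nat \<Rightarrow> 'a::real_normed_vector) \<Rightarrow> real" where
  "sqnormN N w = (\<Sum>i<N. (norm (w i))\<^sup>2) / real N"

definition admissible ::
  "real \<Rightarrow> real \<Rightarrow> real \<Rightarrow> (real \<Rightarrow> 'a \<times> 'a \<Rightarrow> 'a::euclidean_space) \<Rightarrow> bool" where
  "admissible CB a T f \<longleftrightarrow>
     (\<forall>z. (\<lambda>t. f t z) \<in> borel_measurable (lebesgue_on {a..T})) \<and>
     (AE t in lebesgue_on {a..T}. \<exists>L. norm (f t 0) + L \<le> CB \<and> L-lipschitz_on UNIV (f t))"

definition cs_rhs ::
  "('a \<Rightarrow> 'a \<Rightarrow> real) \<Rightarrow> nat \<Rightarrow> (real \<Rightarrow> 'a \<times> 'a \<Rightarrow> 'a::euclidean_space)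
    \<Rightarrow> (nat \<Rightarrow> real \<Rightarrow> 'a) \<Rightarrow> (nat \<Rightarrow> real \<Rightarrow> 'a) \<Rightarrow> nat \<Rightarrow> real \<Rightarrow> 'a" where
  "cs_rhs \<Psi> N f x v i t =
     (1 / real N) *\<^sub>R (\<Sum>j<N. \<Psi> (x i t) (x j t) *\<^sub>R (v j t - v i t)) + f t (x i t, v i t)"

text \<open>(Caratheodory / absolutely continuous) solution on [a,T] with data (x0,v0) at time a.\<close>

definition is_trajectory ::
  "('a \<Rightarrow> 'a \<Rightarrow> real) \<Rightarrow> nat \<Rightarrow> (real \<Rightarrow> 'a \<times> 'a \<Rightarrow> 'a::euclidean_space) \<Rightarrow> real \<Rightarrow> real
    \<Rightarrow> (nat \<Rightarrow> 'a) \<Rightarrow> (nat \<Rightarrow> 'a) \<Rightarrow> (nat \<Rightarrow> real \<Rightarrow> 'a) \<Rightarrow> (nat \<Rightarrow> real \<Rightarrow> 'a) \<Rightarrow> bool" where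
  "is_trajectory \<Psi> N f a T x0 v0 x v \<longleftrightarrow>
     (\<forall>i<N. x i a = x0 i \<and> v i a = v0 i \<and>
        v i absolutely_integrable_on {a..T} \<and>
        cs_rhs \<Psi> N f x v i absolutely_integrable_on {a..T} \<and>
        (\<forall>t\<in>{a..T}. (v i has_integral (x i t - x i a)) {a..t} \<and>
                      (cs_rhs \<Psi> N f x v i has_integral (v i t - v i a)) {a..t}))"

definition cost ::
  "real \<Rightarrow> 'a \<Rightarrow> nat \<Rightarrow> (real \<Rightarrow> 'a \<times> 'a \<Rightarrow> 'a::euclidean_space)
    \<Rightarrow> (nat \<Rightarrow> real \<Rightarrow> 'a) \<Rightarrow> (nat \<Rightarrow> real \<Rightarrow> 'a) \<Rightarrow> real \<Rightarrow> real \<Rightarrow> real" where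
  "cost lam vbar N f x v a T =
     integral {a..T} (\<lambda>t. sqnormN N (\<lambda>i. v i t - vbar) + lam * sqnormN N (\<lambda>i. f t (x i t, v i t)))"

definition optimal_control ::
  "('a \<Rightarrow> 'a \<Rightarrow> real) \<Rightarrow> real \<Rightarrow> real \<Rightarrow> 'a \<Rightarrow> nat \<Rightarrow> real \<Rightarrow> real
    \<Rightarrow> (nat \<Rightarrow> 'a) \<Rightarrow> (nat \<Rightarrow> 'a) \<Rightarrow> (real \<Rightarrow> 'a \<times> 'a \<Rightarrow> 'a::euclidean_space)
    \<Rightarrow> (nat \<Rightarrow> real \<Rightarrow> 'a) \<Rightarrow> (nat \<Rightarrow> real \<Rightarrow> 'a) \<Rightarrow> bool" where
  "optimal_control \<Psi> CB lam vbar N a T x0 v0 f x v \<longleftrightarrow>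
     admissible CB a T f \<and> is_trajectory \<Psi> N f a T x0 v0 x v \<and>
     (\<forall>g y w. admissible CB a T g \<and> is_trajectory \<Psi> N g a T x0 v0 y w \<longrightarrow>
        cost lam vbar N f x v a T \<le> cost lam vbar N g y w a T)"

end

theory Submission
  imports Defs
begin

lemma lip_comp_cont:
  fixes G :: "(nat \<Rightarrow> 'b::real_normed_vector) \<Rightarrow> 'c::real_normed_vector"
  assumes lip: "\<And>X Y. norm (G X - G Y) \<le> L * (\<Sum>j<N. norm (X j - Y j))"
    and cont: "\<And>j. j < N \<Longrightarrow> continuous_on S (f j)"
  shows "continuous_on S (\<lambda>s. G (\<lambda>j. f j s))"
  unfolding continuous_on_def
proof (intro ballI)
  fix x assume x: "x \<in> S"
  have lim: "((\<lambda>s. L * (\<Sum>j<N. norm (f j s - f j x))) \<longlongrightarrow> L * (\<Sum>j<N. norm (f j x - f j x))) (at x within S)"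
    using cont x by (intro tendsto_intros) (auto simp: continuous_on_def)
  have "((\<lambda>s. G (\<lambda>j. f j s) - G (\<lambda>j. f j x)) \<longlongrightarrow> 0) (at x within S)"
    by (rule Lim_null_comparison[OF _ lim[simplified]]) (intro always_eventually allI lip)
  then show "((\<lambda>s. G (\<lambda>j. f j s)) \<longlongrightarrow> G (\<lambda>j. f j x)) (at x within S)"
    using Lim_null by blast
qed

lemma exp_integral_aux:
  fixes M :: real assumes "M > 0" "a \<le> c"
  shows "((\<lambda>s. exp (M * s)) has_integral (exp (M * c) - exp (M * a)) / M) {a..c}"
proof -
  have "((\<lambda>s. exp (M * s)) has_integral (exp (M * c) / M - exp (M * a) / M)) {a..c}"
  proof (rule fundamental_theorem_of_calculus[OF assms(2)])
    fix x :: real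
    have "((\<lambda>s. exp (M * s) / M) has_real_derivative exp (M * x)) (at x within {a..c})"
      using assms(1) by (auto intro!: derivative_eq_intros)
    then show "((\<lambda>s. exp (M * s) / M) has_vector_derivative exp (M * x)) (at x within {a..c})"
      by (simp add: has_real_derivative_iff_has_vector_derivative)
  qed
  then show ?thesis by (simp add: diff_divide_distrib)
qed

lemma complete_bcontfun_any: "complete (UNIV :: ('a::topological_space \<Rightarrow>\<^sub>C 'b::complete_space) set)"
proof (rule completeI)
  fix f :: "nat \<Rightarrow> ('a, 'b) bcontfun"
  assume "Cauchy f"
  then obtain g where "uniform_limit UNIV f g sequentially"
    using uniformly_convergent_eq_cauchy[of "\<lambda>_. True" f]
    unfolding Cauchy_def uniform_limit_sequentially_iff
    by (metis dist_fun_lt_imp_dist_val_lt)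
  from uniform_limit_bcontfunE[OF this sequentially_bot]
  obtain l' where "g = apply_bcontfun l'" "(f \<longlonglongrightarrow> l')" by metis
  then show "\<exists>l\<in>UNIV. f \<longlonglongrightarrow> l" by blast
qed

lemma bcontfun_zero_fun: "Bcontfun (\<lambda>_. 0) = (0 :: 'a::topological_space \<Rightarrow>\<^sub>C 'b::real_normed_vector)"
  by (simp flip: zero_bcontfun.rep_eq add: apply_bcontfun_inverse)

lemma picard_exists:
  fixes G :: "nat \<Rightarrow> (nat \<Rightarrow> 'b::euclidean_space) \<Rightarrow> 'b" and u0 :: "nat \<Rightarrow> 'b" and a T :: real
  assumes aT: "a \<le> T" and L: "L \<ge> 0"
    and lip: "\<And>i X Y. i < N \<Longrightarrow> norm (G i X - G i Y) \<le> L * (\<Sum>j<N. norm (X j - Y j))"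
  shows "\<exists>u. \<forall>i<N. continuous_on {a..T} (u i) \<and>
           (\<forall>t\<in>{a..T}. u i t = u0 i + integral {a..t} (\<lambda>s. G i (\<lambda>j. u j s)))"
proof -
  define M :: real where "M = 2 * L * real N + 1"
  have LN: "0 \<le> L * real N" using L by simp
  have M: "M > 0" "L * real N / M \<le> 1/2" using LN by (auto simp: M_def divide_le_eq)
  define cl where "cl t = max a (min T t)" for t
  have cl: "cl t \<in> {a..T}" for t using aT by (auto simp: cl_def max_def min_def)
  have cl_id: "t \<in> {a..T} \<Longrightarrow> cl t = t" for t by (auto simp: cl_def)
  have cl_cont: "continuous_on UNIV cl" unfolding cl_def by (intro continuous_intros)
  define U where "U W j s = exp (M * s) *\<^sub>R apply_bcontfun (apply_bcontfun W j) s"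
    for W :: "nat \<Rightarrow>\<^sub>C (real \<Rightarrow>\<^sub>C 'b)" and j s
  define h where "h W i s = G i (\<lambda>j. U W j s)" for W i s
  have U_cont: "continuous_on S (U W j)" for W j S
    unfolding U_def by (intro continuous_intros) auto
  have h_cont: "continuous_on S (h W i)" if "i < N" for W i S
    unfolding h_def by (rule lip_comp_cont[OF lip[OF that] U_cont])
  define g where "g W i t = exp (- M * t) *\<^sub>R (u0 i + integral {a..t} (h W i))" for W i t
  have g_cont: "continuous_on {a..T} (g W i)" if "i < N" for W i
    unfolding g_def
    by (intro continuous_intros indefinite_integral_continuous_1 integrable_continuous_interval h_cont that)
  define phi where "phi W i t = (if i < N then g W i (cl t) else 0)" for W i t
  have phi_bc: "phi W i \<in> bcontfun" for W i
  proof (cases "i < N")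
    case True
    have c: "continuous_on UNIV (phi W i)"
    proof -
      have "continuous_on UNIV (\<lambda>x. g W i (cl x))"
        by (rule continuous_on_compose2[OF g_cont[OF True] cl_cont]) (use cl in auto)
      then show ?thesis using True by (simp add: phi_def)
    qed
    have "range (phi W i) \<subseteq> g W i ` {a..T}" using True cl by (auto simp: phi_def)
    moreover have "bounded (g W i ` {a..T})"
      by (intro compact_imp_bounded compact_continuous_image g_cont True compact_Icc)
    ultimately show ?thesis using c by (auto simp: bcontfun_def intro: bounded_subset)
  next
    case False
    then have "phi W i = (\<lambda>_. 0)" by (auto simp: phi_def)
    then show ?thesis by (simp add: const_bcontfun)
  qed
  define Phi where "Phi W = Bcontfun (\<lambda>i. Bcontfun (phi W i))" for W
  have Phi_bc: "(\<lambda>i. Bcontfun (phi W i)) \<in> bcontfun" for W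
  proof -
    have "range (\<lambda>i. Bcontfun (phi W i)) \<subseteq> (\<lambda>i. Bcontfun (phi W i)) ` {..<N} \<union> {0}"
    proof (clarsimp)
      fix i assume "Bcontfun (phi W i) \<notin> (\<lambda>i. Bcontfun (phi W i)) ` {..<N}"
      then have "\<not> i < N" by auto
      then have "phi W i = (\<lambda>_. 0)" by (auto simp: phi_def)
      then show "Bcontfun (phi W i) = 0" by (simp add: bcontfun_zero_fun)
    qed
    moreover have "bounded ((\<lambda>i. Bcontfun (phi W i)) ` {..<N} \<union> {0})"
      by (intro finite_imp_bounded) auto
    ultimately have "bounded (range (\<lambda>i. Bcontfun (phi W i)))" by (rule bounded_subset[rotated])
    then show ?thesis by (auto simp: bcontfun_def)
  qed
  have Phi_app: "apply_bcontfun (apply_bcontfun (Phi W) i) t = phi W i t" for W i t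
    unfolding Phi_def using Phi_bc phi_bc by (simp add: Bcontfun_inverse)
  have contr: "dist (Phi W) (Phi W') \<le> 1/2 * dist W W'" for W W'
  proof -
    define D where "D = dist W W'"
    have D0: "D \<ge> 0" by (simp add: D_def)
    have WD: "norm (apply_bcontfun (apply_bcontfun W j) s - apply_bcontfun (apply_bcontfun W' j) s) \<le> D" for j s
      using dist_bounded[where f="apply_bcontfun W j" and g="apply_bcontfun W' j" and x=s] dist_bounded[where f=W and g=W' and x=j]
      by (simp add: D_def dist_norm)
    have hD: "norm (h W i s - h W' i s) \<le> L * real N * D * exp (M * s)" if "i < N" for i s
    proof -
      have "norm (h W i s - h W' i s) \<le> L * (\<Sum>j<N. norm (U W j s - U W' j s))"
        unfolding h_def by (rule lip[OF that])
      also have "\<dots> \<le> L * (\<Sum>j<N. exp (M * s) * D)"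
      proof (intro mult_left_mono sum_mono L)
        fix j
        have "norm (U W j s - U W' j s) = exp (M * s) * norm (apply_bcontfun (apply_bcontfun W j) s - apply_bcontfun (apply_bcontfun W' j) s)"
          unfolding U_def by (simp flip: scaleR_diff_right)
        also have "\<dots> \<le> exp (M * s) * D" by (intro mult_left_mono WD) auto
        finally show "norm (U W j s - U W' j s) \<le> exp (M * s) * D" .
      qed
      finally show ?thesis by (simp add: algebra_simps)
    qed
    have "dist (apply_bcontfun (Phi W) i) (apply_bcontfun (Phi W') i) \<le> 1/2 * D" for i
    proof (rule dist_bound)
      fix t
      show "dist (apply_bcontfun (apply_bcontfun (Phi W) i) t) (apply_bcontfun (apply_bcontfun (Phi W') i) t) \<le> 1/2 * D"
      proof (cases "i < N")
        case False
        then show ?thesis by (simp add: Phi_app phi_def D0)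
      next
        case True
        define c where "c = cl t"
        have c: "a \<le> c" "c \<le> T" using cl[of t] by (auto simp: c_def)
        have int1: "h W i integrable_on {a..c}" "h W' i integrable_on {a..c}"
          by (intro integrable_continuous_interval h_cont True)+
        have ie: "((\<lambda>s. L * real N * D * exp (M * s)) has_integral L * real N * D * ((exp (M * c) - exp (M * a)) / M)) {a..c}"
          by (intro has_integral_mult_right exp_integral_aux M c)
        have "norm (integral {a..c} (h W i) - integral {a..c} (h W' i))
              = norm (integral {a..c} (\<lambda>s. h W i s - h W' i s))"
          using int1 by (simp add: integral_diff)
        also have "\<dots> \<le> L * real N * D * ((exp (M * c) - exp (M * a)) / M)"
          by (rule integral_norm_bound_integral[where g="\<lambda>s. L * real N * D * exp (M * s)", OF
               integrable_diff[OF int1] has_integral_integrable[OF ie], simplified integral_unique[OF ie]])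
             (rule hD[OF True])
        also have "\<dots> \<le> L * real N * D * (exp (M * c) / M)"
          using L D0 M by (intro mult_left_mono divide_right_mono) auto
        finally have n1: "norm (integral {a..c} (h W i) - integral {a..c} (h W' i)) \<le> L * real N * D * (exp (M * c) / M)" .
        have "dist (phi W i t) (phi W' i t) = exp (- M * c) * norm (integral {a..c} (h W i) - integral {a..c} (h W' i))"
          using True by (simp add: phi_def g_def c_def dist_norm flip: scaleR_diff_right)
        also have "\<dots> \<le> exp (- M * c) * (L * real N * D * (exp (M * c) / M))"
          by (intro mult_left_mono n1) auto
        also have "\<dots> = (L * real N / M) * D"
          using M by (simp add: field_simps exp_minus)
        also have "\<dots> \<le> 1/2 * D" using M D0 by (intro mult_right_mono) auto
        finally show ?thesis by (simp add: Phi_app)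
      qed
    qed
    then show ?thesis unfolding D_def by (rule dist_bound)
  qed
  obtain W where W: "Phi W = W"
    using Banach_fix[OF complete_bcontfun_any UNIV_not_empty, of "1/2" Phi] contr by auto
  define u where "u j s = U W j s" for j s
  show ?thesis
  proof (intro exI[of _ u] allI impI conjI ballI)
    fix i assume i: "i < N"
    show "continuous_on {a..T} (u i)" unfolding u_def by (rule U_cont)
    fix t assume t: "t \<in> {a..T}"
    have "apply_bcontfun (apply_bcontfun W i) t = g W i t"
      using Phi_app[of W i t] W i cl_id[OF t] by (simp add: phi_def)
    then show "u i t = u0 i + integral {a..t} (\<lambda>s. G i (\<lambda>j. u j s))"
      by (simp add: u_def U_def g_def h_def[abs_def] exp_minus field_simps)
  qed
qed

definition clip :: "real \<Rightarrow> 'a::real_normed_vector \<Rightarrow> 'a" where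
  "clip R d = (if norm d \<le> R then d else (R / norm d) *\<^sub>R d)"

lemma clip_norm: "R \<ge> 0 \<Longrightarrow> norm (clip R d) \<le> R"
  by (auto simp: clip_def)

lemma clip_id: "norm d \<le> R \<Longrightarrow> clip R d = d"
  by (simp add: clip_def)

lemma clip_minus: "clip R (- d) = - clip R d"
  by (simp add: clip_def)

lemma clip_inner: "R \<ge> 0 \<Longrightarrow> 0 \<le> inner d (clip R (d::'a::real_inner))"
  by (auto simp: clip_def)

lemma clip_lip:
  fixes x y :: "'a::real_normed_vector"
  assumes R: "R > 0"
  shows "norm (clip R x - clip R y) \<le> 2 * norm (x - y)"
proof -
  have out_in: "norm ((R / norm x) *\<^sub>R x - y) \<le> 2 * norm (x - y)" if "norm x > R" "norm y \<le> R" for x y :: 'a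
  proof -
    have nx: "norm x > 0" using that R by auto
    have "norm ((R / norm x) *\<^sub>R x - y) \<le> norm ((R / norm x) *\<^sub>R x - x) + norm (x - y)"
      using norm_triangle_ineq[of "(R / norm x) *\<^sub>R x - x" "x - y"] by simp
    also have "(R / norm x) *\<^sub>R x - x = (R / norm x - 1) *\<^sub>R x" by (simp add: algebra_simps)
    also have "norm \<dots> = (norm x - R)"
      using nx that R by (simp add: abs_if field_simps)
    also have "norm x - R \<le> norm x - norm y" using that by simp
    also have "\<dots> \<le> norm (x - y)" by (rule norm_triangle_ineq2)
    finally show ?thesis by simp
  qed
  show ?thesis
  proof (cases "norm x \<le> R")
    case x: True
    show ?thesis
    proof (cases "norm y \<le> R")
      case True
      then show ?thesis using x by (simp add: clip_def)
    next
      case False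
      then have "norm ((R / norm y) *\<^sub>R y - x) \<le> 2 * norm (y - x)" using out_in x by simp
      then show ?thesis using x False by (simp add: clip_def norm_minus_commute)
    qed
  next
    case x: False
    show ?thesis
    proof (cases "norm y \<le> R")
      case True
      then show ?thesis using x out_in by (simp add: clip_def)
    next
      case y: False
      have nx: "norm x > 0" "norm y > 0" using x y R by auto
      have "(R / norm x) *\<^sub>R x - (R / norm y) *\<^sub>R y = R *\<^sub>R ((1 / norm x) *\<^sub>R (x - y) + (1 / norm x - 1 / norm y) *\<^sub>R y)"
        by (simp add: algebra_simps)
      also have "norm \<dots> \<le> R * (norm (x - y) / norm x + \<bar>1 / norm x - 1 / norm y\<bar> * norm y)"
        using R by (auto intro!: mult_left_mono order_trans[OF norm_triangle_ineq])
      also have "\<bar>1 / norm x - 1 / norm y\<bar> * norm y = \<bar>norm y - norm x\<bar> / norm x"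
        using nx by (simp add: field_simps abs_div)
      also have "\<bar>norm y - norm x\<bar> \<le> norm (x - y)"
        by (metis norm_minus_commute norm_triangle_ineq3)
      also have "R * (norm (x - y) / norm x + norm (x - y) / norm x) = 2 * norm (x - y) * (R / norm x)"
        by (simp add: field_simps)
      also have "\<dots> \<le> 2 * norm (x - y) * 1"
        using x nx by (intro mult_left_mono) auto
      finally show ?thesis using x y by (simp add: clip_def divide_right_mono mult_left_mono R less_imp_le)
    qed
  qed
qed

definition fld :: "('a::euclidean_space \<Rightarrow> 'a \<Rightarrow> real) \<Rightarrow> nat \<Rightarrow> real \<Rightarrow> real \<Rightarrow> 'a \<Rightarrow> nat \<Rightarrow> (nat \<Rightarrow> 'a \<times> 'a) \<Rightarrow> 'a \<times> 'a" where
  "fld \<Psi> N R k vbar i X = (snd (X i),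
     (1 / real N) *\<^sub>R (\<Sum>j<N. \<Psi> (fst (X i)) (fst (X j)) *\<^sub>R clip R (snd (X j) - snd (X i))) - k *\<^sub>R (snd (X i) - vbar))"

lemma fld_lip:
  fixes \<Psi> :: "'a::euclidean_space \<Rightarrow> 'a \<Rightarrow> real"
  assumes lipP: "LP-lipschitz_on UNIV (\<lambda>p. \<Psi> (fst p) (snd p))"
    and bnd: "\<And>y z. 0 \<le> \<Psi> y z \<and> \<Psi> y z \<le> CP"
    and R: "R > 0" and k: "k \<ge> 0" and N: "N \<ge> 1" and i: "i < N"
  shows "norm (fld \<Psi> N R k vbar i X - fld \<Psi> N R k vbar i Y)
         \<le> (1 + k + 2 * (LP * R + 2 * CP)) * (\<Sum>j<N. norm (X j - Y j))"
proof -
  define n where "n j = norm (X j - Y j)" for j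
  define S where "S = (\<Sum>j<N. n j)"
  have n0: "n j \<ge> 0" for j by (simp add: n_def)
  have niS: "n i \<le> S" unfolding S_def using i n0 by (intro member_le_sum) auto
  have S0: "S \<ge> 0" unfolding S_def using n0 by (simp add: sum_nonneg)
  have LP: "LP \<ge> 0" using lipschitz_on_nonneg[OF lipP] .
  have CP: "CP \<ge> 0" using bnd[of vbar vbar] by linarith
  define C1 where "C1 = LP * R + 2 * CP"
  have C10: "C1 \<ge> 0" using LP CP R by (simp add: C1_def)
  have fst_le: "norm (fst (X j) - fst (Y j)) \<le> n j" for j
    unfolding n_def using norm_fst_le[of "fst (X j) - fst (Y j)" "snd (X j) - snd (Y j)"] by (simp add: minus_prod_def)
  have snd_le: "norm (snd (X j) - snd (Y j)) \<le> n j" for j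
    unfolding n_def using norm_snd_le[of "snd (X j) - snd (Y j)" "fst (X j) - fst (Y j)"] by (simp add: minus_prod_def)
  have trm: "norm (\<Psi> (fst (X i)) (fst (X j)) *\<^sub>R clip R (snd (X j) - snd (X i))
             - \<Psi> (fst (Y i)) (fst (Y j)) *\<^sub>R clip R (snd (Y j) - snd (Y i))) \<le> C1 * (n i + n j)" for j
  proof -
    define p1 where "p1 = \<Psi> (fst (X i)) (fst (X j))"
    define p2 where "p2 = \<Psi> (fst (Y i)) (fst (Y j))"
    define c1 where "c1 = clip R (snd (X j) - snd (X i))"
    define c2 where "c2 = clip R (snd (Y j) - snd (Y i))"
    have "\<bar>p1 - p2\<bar> \<le> LP * dist (fst (X i), fst (X j)) (fst (Y i), fst (Y j))"
      using lipschitz_onD[OF lipP, of "(fst (X i), fst (X j))" "(fst (Y i), fst (Y j))"]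
      by (simp add: p1_def p2_def dist_real_def)
    also have "dist (fst (X i), fst (X j)) (fst (Y i), fst (Y j)) \<le> n i + n j"
      unfolding dist_norm using norm_Pair_le[of "fst (X i) - fst (Y i)" "fst (X j) - fst (Y j)"] fst_le[of i] fst_le[of j]
      by simp
    finally have dp: "\<bar>p1 - p2\<bar> \<le> LP * (n i + n j)" using LP by (simp add: mult_left_mono)
    have "norm (c1 - c2) \<le> 2 * norm ((snd (X j) - snd (X i)) - (snd (Y j) - snd (Y i)))"
      unfolding c1_def c2_def by (rule clip_lip[OF R])
    also have "norm ((snd (X j) - snd (X i)) - (snd (Y j) - snd (Y i))) \<le> n j + n i"
      using norm_triangle_ineq4[of "snd (X j) - snd (Y j)" "snd (X i) - snd (Y i)"] snd_le[of i] snd_le[of j]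
      by (simp add: algebra_simps)
    finally have dc: "norm (c1 - c2) \<le> 2 * (n i + n j)" by simp
    have "p1 *\<^sub>R c1 - p2 *\<^sub>R c2 = (p1 - p2) *\<^sub>R c1 + p2 *\<^sub>R (c1 - c2)" by (simp add: algebra_simps)
    then have "norm (p1 *\<^sub>R c1 - p2 *\<^sub>R c2) \<le> \<bar>p1 - p2\<bar> * norm c1 + \<bar>p2\<bar> * norm (c1 - c2)"
      using norm_triangle_ineq[of "(p1 - p2) *\<^sub>R c1" "p2 *\<^sub>R (c1 - c2)"] by simp
    also have "\<dots> \<le> (LP * (n i + n j)) * R + CP * (2 * (n i + n j))"
      using dp dc clip_norm[of R] R bnd[of "fst (Y i)" "fst (Y j)"] n0[of i] n0[of j] LP
      by (intro add_mono mult_mono) (auto simp: c1_def p2_def)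
    also have "\<dots> = C1 * (n i + n j)" by (simp add: C1_def algebra_simps)
    finally show ?thesis by (simp add: p1_def p2_def c1_def c2_def)
  qed
  have "norm ((1 / real N) *\<^sub>R (\<Sum>j<N. \<Psi> (fst (X i)) (fst (X j)) *\<^sub>R clip R (snd (X j) - snd (X i)))
        - (1 / real N) *\<^sub>R (\<Sum>j<N. \<Psi> (fst (Y i)) (fst (Y j)) *\<^sub>R clip R (snd (Y j) - snd (Y i))))
     = (1 / real N) * norm (\<Sum>j<N. \<Psi> (fst (X i)) (fst (X j)) *\<^sub>R clip R (snd (X j) - snd (X i))
           - \<Psi> (fst (Y i)) (fst (Y j)) *\<^sub>R clip R (snd (Y j) - snd (Y i)))"
    by (simp flip: scaleR_diff_right add: sum_subtractf)
  also have "\<dots> \<le> (1 / real N) * (\<Sum>j<N. C1 * (n i + n j))"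
    by (intro mult_left_mono order_trans[OF norm_sum sum_mono] trm) auto
  also have "\<dots> = C1 * n i + C1 * S / real N"
  proof -
    have "(\<Sum>j<N. C1 * (n i + n j)) = real N * (C1 * n i) + C1 * S"
      by (simp add: S_def sum.distrib sum_distrib_left distrib_left)
    then show ?thesis using N by (simp add: field_simps)
  qed
  also have "\<dots> \<le> C1 * S + C1 * S"
  proof (intro add_mono)
    show "C1 * n i \<le> C1 * S" using C10 niS by (simp add: mult_left_mono)
    have cs: "0 \<le> C1 * S" using C10 S0 by simp
    have "real N \<ge> 1" using N by simp
    then show "C1 * S / real N \<le> C1 * S" using cs by (simp add: divide_le_eq mult_le_cancel_left1)
  qed
  finally have A: "norm ((1 / real N) *\<^sub>R (\<Sum>j<N. \<Psi> (fst (X i)) (fst (X j)) *\<^sub>R clip R (snd (X j) - snd (X i)))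
        - (1 / real N) *\<^sub>R (\<Sum>j<N. \<Psi> (fst (Y i)) (fst (Y j)) *\<^sub>R clip R (snd (Y j) - snd (Y i)))) \<le> 2 * C1 * S"
    by simp
  have B: "norm (k *\<^sub>R (snd (X i) - vbar) - k *\<^sub>R (snd (Y i) - vbar)) \<le> k * S"
    using snd_le[of i] niS k by (simp flip: scaleR_diff_right add: mult_left_mono)
  have "norm (fld \<Psi> N R k vbar i X - fld \<Psi> N R k vbar i Y)
     \<le> norm (snd (X i) - snd (Y i)) + norm ((1 / real N) *\<^sub>R (\<Sum>j<N. \<Psi> (fst (X i)) (fst (X j)) *\<^sub>R clip R (snd (X j) - snd (X i))) - k *\<^sub>R (snd (X i) - vbar)
       - ((1 / real N) *\<^sub>R (\<Sum>j<N. \<Psi> (fst (Y i)) (fst (Y j)) *\<^sub>R clip R (snd (Y j) - snd (Y i))) - k *\<^sub>R (snd (Y i) - vbar)))"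
    unfolding fld_def minus_prod_def prod.sel by (rule norm_Pair_le)
  also have "\<dots> \<le> S + (2 * C1 * S + k * S)"
  proof (rule add_mono)
    show "norm (snd (X i) - snd (Y i)) \<le> S" using snd_le[of i] niS by simp
    show "norm ((1 / real N) *\<^sub>R (\<Sum>j<N. \<Psi> (fst (X i)) (fst (X j)) *\<^sub>R clip R (snd (X j) - snd (X i))) - k *\<^sub>R (snd (X i) - vbar)
       - ((1 / real N) *\<^sub>R (\<Sum>j<N. \<Psi> (fst (Y i)) (fst (Y j)) *\<^sub>R clip R (snd (Y j) - snd (Y i))) - k *\<^sub>R (snd (Y i) - vbar)))
       \<le> 2 * C1 * S + k * S"
      by (rule order_trans[OF _ add_mono[OF A B]], rule order_trans[OF _ norm_triangle_ineq4], simp add: algebra_simps)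
  qed
  also have "\<dots> = (1 + k + 2 * C1) * S" by (simp add: algebra_simps)
  finally show ?thesis by (simp add: C1_def S_def n_def)
qed

lemma dissip:
  fixes w :: "nat \<Rightarrow> 'a::real_inner" and c :: "nat \<Rightarrow> nat \<Rightarrow> real"
  assumes sym: "\<And>i j. c i j = c j i" and nn: "\<And>i j. c i j \<ge> 0" and R: "R \<ge> 0"
  shows "(\<Sum>i<N. inner (w i - vbar) (\<Sum>j<N. c i j *\<^sub>R clip R (w j - w i))) \<le> 0"
proof -
  define S where "S = (\<Sum>i<N. \<Sum>j<N. c i j * inner (w i - vbar) (clip R (w j - w i)))"
  have eq1: "(\<Sum>i<N. inner (w i - vbar) (\<Sum>j<N. c i j *\<^sub>R clip R (w j - w i))) = S"
    by (simp add: S_def inner_sum_right)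
  have "S = (\<Sum>j<N. \<Sum>i<N. c i j * inner (w i - vbar) (clip R (w j - w i)))"
    unfolding S_def by (rule sum.swap)
  also have "\<dots> = (\<Sum>i<N. \<Sum>j<N. - (c i j * inner (w j - vbar) (clip R (w j - w i))))"
  proof (intro sum.cong refl)
    fix i j
    have "clip R (w i - w j) = - clip R (w j - w i)"
      using clip_minus[of R "w j - w i"] by simp
    then show "c j i * inner (w j - vbar) (clip R (w i - w j)) = - (c i j * inner (w j - vbar) (clip R (w j - w i)))"
      by (simp add: sym[of j i])
  qed
  finally have S2: "S = - (\<Sum>i<N. \<Sum>j<N. c i j * inner (w j - vbar) (clip R (w j - w i)))"
    by (simp add: sum_negf)
  have "2 * S = (\<Sum>i<N. \<Sum>j<N. c i j * inner (w i - vbar) (clip R (w j - w i)))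
              - (\<Sum>i<N. \<Sum>j<N. c i j * inner (w j - vbar) (clip R (w j - w i)))"
    using S2 by (simp add: S_def)
  also have "\<dots> = (\<Sum>i<N. \<Sum>j<N. - (c i j * inner (w j - w i) (clip R (w j - w i))))"
    by (simp add: sum_subtractf[symmetric] inner_diff_left algebra_simps)
  also have "\<dots> \<le> 0"
    using nn clip_inner[OF R] by (intro sum_nonpos) (simp add: mult_nonneg_nonneg[OF nn clip_inner[OF R]])
  finally show ?thesis using eq1 by simp
qed

lemma deriv_sqnorm:
  fixes f :: "real \<Rightarrow> 'a::real_inner"
  assumes "(f has_vector_derivative f') (at t within S)"
  shows "((\<lambda>t. (norm (f t))\<^sup>2) has_real_derivative (2 * inner (f t) f')) (at t within S)"
proof -
  from assms have d: "(f has_derivative (\<lambda>h. h *\<^sub>R f')) (at t within S)"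
    by (simp add: has_vector_derivative_def)
  have "((\<lambda>t. inner (f t) (f t)) has_derivative (\<lambda>h. inner (f t) (h *\<^sub>R f') + inner (h *\<^sub>R f') (f t))) (at t within S)"
    by (rule has_derivative_inner[OF d d])
  then show ?thesis
    unfolding has_field_derivative_def power2_norm_eq_inner
    by (rule has_derivative_eq_rhs) (auto simp: fun_eq_iff inner_commute algebra_simps)
qed

lemma sqnormN_nonneg: "sqnormN N w \<ge> 0"
  by (simp add: sqnormN_def sum_nonneg)

lemma feedback_solution:
  fixes \<Psi> :: "'a::euclidean_space \<Rightarrow> 'a \<Rightarrow> real" and xin vin :: "nat \<Rightarrow> 'a" and a T k :: real
  assumes lipP: "LP-lipschitz_on UNIV (\<lambda>p. \<Psi> (fst p) (snd p))"
    and sym: "\<And>y z. \<Psi> y z = \<Psi> z y" and bnd: "\<And>y z. 0 \<le> \<Psi> y z \<and> \<Psi> y z \<le> CP"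
    and k: "k > 0" and N: "N \<ge> 1" and aT: "a \<le> T"
  shows "\<exists>y w. (\<forall>i<N. y i a = xin i \<and> w i a = vin i \<and> continuous_on {a..T} (y i) \<and> continuous_on {a..T} (w i)
      \<and> continuous_on {a..T} (\<lambda>s. (1 / real N) *\<^sub>R (\<Sum>j<N. \<Psi> (y i s) (y j s) *\<^sub>R (w j s - w i s)) - k *\<^sub>R (w i s - vbar))
      \<and> (\<forall>t\<in>{a..T}. (w i has_integral (y i t - y i a)) {a..t}
          \<and> ((\<lambda>s. (1 / real N) *\<^sub>R (\<Sum>j<N. \<Psi> (y i s) (y j s) *\<^sub>R (w j s - w i s)) - k *\<^sub>R (w i s - vbar))
               has_integral (w i t - w i a)) {a..t}))
    \<and> integral {a..T} (\<lambda>t. 2 * sqnormN N (\<lambda>i. w i t - vbar)) \<le> (1/k) * sqnormN N (\<lambda>i. vin i - vbar)"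
proof -
  define E0 where "E0 = sqnormN N (\<lambda>i. vin i - vbar)"
  have E00: "E0 \<ge> 0" unfolding E0_def by (rule sqnormN_nonneg)
  define R where "R = 2 * sqrt (real N * E0) + 1"
  have sq: "sqrt (real N * E0) \<ge> 0" using E00 by simp
  have R: "R > 0" unfolding R_def using sq by linarith
  have LP: "LP \<ge> 0" using lipschitz_on_nonneg[OF lipP] .
  have CP: "CP \<ge> 0" using bnd[of vbar vbar] by linarith
  define L where "L = 1 + k + 2 * (LP * R + 2 * CP)"
  have L0: "L \<ge> 0" using LP CP R k by (simp add: L_def)
  have lip: "\<And>i X Y. i < N \<Longrightarrow> norm (fld \<Psi> N R k vbar i X - fld \<Psi> N R k vbar i Y) \<le> L * (\<Sum>j<N. norm (X j - Y j))"
    unfolding L_def using fld_lip[OF lipP bnd R less_imp_le[OF k] N] by blast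
  have "\<exists>u. \<forall>i<N. continuous_on {a..T} (u i) \<and>
      (\<forall>t\<in>{a..T}. u i t = (xin i, vin i) + integral {a..t} (\<lambda>s. fld \<Psi> N R k vbar i (\<lambda>j. u j s)))"
    by (rule picard_exists[OF aT L0 lip])
  then obtain u where u: "\<forall>i<N. continuous_on {a..T} (u i) \<and>
      (\<forall>t\<in>{a..T}. u i t = (xin i, vin i) + integral {a..t} (\<lambda>s. fld \<Psi> N R k vbar i (\<lambda>j. u j s)))"
    by blast
  define y where "y i t = fst (u i t)" for i t
  define w where "w i t = snd (u i t)" for i t
  define h where "h i s = fld \<Psi> N R k vbar i (\<lambda>j. u j s)" for i s
  define r where "r i s = (1 / real N) *\<^sub>R (\<Sum>j<N. \<Psi> (y i s) (y j s) *\<^sub>R clip R (w j s - w i s)) - k *\<^sub>R (w i s - vbar)" for i s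
  define \<rho> where "\<rho> i s = (1 / real N) *\<^sub>R (\<Sum>j<N. \<Psi> (y i s) (y j s) *\<^sub>R (w j s - w i s)) - k *\<^sub>R (w i s - vbar)" for i s
  have h_eq: "h i s = (w i s, r i s)" for i s
    by (simp add: h_def fld_def r_def y_def w_def)
  have uc: "i < N \<Longrightarrow> continuous_on {a..T} (u i)" for i using u by blast
  have yc: "i < N \<Longrightarrow> continuous_on {a..T} (y i)" for i
    unfolding y_def by (intro continuous_intros uc)
  have wc: "i < N \<Longrightarrow> continuous_on {a..T} (w i)" for i
    unfolding w_def by (intro continuous_intros uc)
  have hc: "i < N \<Longrightarrow> continuous_on {a..T} (h i)" for i
    unfolding h_def by (rule lip_comp_cont[OF lip uc])
  have rc: "i < N \<Longrightarrow> continuous_on {a..T} (r i)" for i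
  proof -
    assume i: "i < N"
    have "continuous_on {a..T} (\<lambda>s. snd (h i s))" by (intro continuous_intros hc i)
    then show ?thesis by (simp add: h_eq)
  qed
  have ueq: "i < N \<Longrightarrow> t \<in> {a..T} \<Longrightarrow> u i t = (xin i, vin i) + integral {a..t} (h i)" for i t
    using u by (simp add: h_def[abs_def])
  have ua: "i < N \<Longrightarrow> u i a = (xin i, vin i)" for i
    using ueq[of i a] aT by simp
  have hint: "i < N \<Longrightarrow> t \<in> {a..T} \<Longrightarrow> (h i has_integral (u i t - (xin i, vin i))) {a..t}" for i t
  proof -
    assume i: "i < N" and t: "t \<in> {a..T}"
    have "h i integrable_on {a..t}"
      by (rule integrable_continuous_interval, rule continuous_on_subset[OF hc[OF i]]) (use t in auto)
    then show ?thesis using ueq[OF i t] by (simp add: integrable_integral)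
  qed
  have w_int: "i < N \<Longrightarrow> t \<in> {a..T} \<Longrightarrow> (w i has_integral (y i t - y i a)) {a..t}" for i t
  proof -
    assume i: "i < N" and t: "t \<in> {a..T}"
    have "((fst \<circ> h i) has_integral fst (u i t - (xin i, vin i))) {a..t}"
      by (rule has_integral_linear[OF hint[OF i t] bounded_linear_fst])
    then show ?thesis by (simp add: o_def h_eq y_def ua[OF i])
  qed
  have r_int: "i < N \<Longrightarrow> t \<in> {a..T} \<Longrightarrow> (r i has_integral (w i t - w i a)) {a..t}" for i t
  proof -
    assume i: "i < N" and t: "t \<in> {a..T}"
    have "((snd \<circ> h i) has_integral snd (u i t - (xin i, vin i))) {a..t}"
      by (rule has_integral_linear[OF hint[OF i t] bounded_linear_snd])
    then show ?thesis by (simp add: o_def h_eq w_def ua[OF i])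
  qed
  have wa: "i < N \<Longrightarrow> w i a = vin i" for i by (simp add: w_def ua)
  have ya: "i < N \<Longrightarrow> y i a = xin i" for i by (simp add: y_def ua)
  have w_deriv: "i < N \<Longrightarrow> t \<in> {a..T} \<Longrightarrow> (w i has_vector_derivative r i t) (at t within {a..T})" for i t
  proof -
    assume i: "i < N" and t: "t \<in> {a..T}"
    have d: "((\<lambda>t. vin i + integral {a..t} (r i)) has_vector_derivative r i t) (at t within {a..T})"
      using integral_has_vector_derivative[OF rc[OF i] t] by (intro derivative_eq_intros) auto
    show ?thesis
    proof (rule has_vector_derivative_transform[OF t _ d])
      fix s assume s: "s \<in> {a..T}"
      show "w i s = vin i + integral {a..s} (r i)"
        using r_int[OF i s] wa[OF i] by (simp add: integral_unique)
    qed
  qed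
  define En where "En t = sqnormN N (\<lambda>i. w i t - vbar)" for t
  define En' where "En' t = (\<Sum>i<N. 2 * inner (w i t - vbar) (r i t)) / real N" for t
  have En_nonneg: "En t \<ge> 0" for t unfolding En_def by (rule sqnormN_nonneg)
  have En_a: "En a = E0" by (simp add: En_def E0_def sqnormN_def wa)
  have En_cont: "continuous_on {a..T} En"
    unfolding En_def sqnormN_def using N by (intro continuous_intros wc) auto
  have En_deriv: "t \<in> {a..T} \<Longrightarrow> (En has_real_derivative En' t) (at t within {a..T})" for t
  proof -
    assume t: "t \<in> {a..T}"
    have "((\<lambda>t. \<Sum>i<N. (norm (w i t - vbar))\<^sup>2) has_real_derivative (\<Sum>i<N. 2 * inner (w i t - vbar) (r i t))) (at t within {a..T})"
    proof (rule DERIV_sum)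
      fix i assume "i \<in> {..<N}"
      then have i: "i < N" by simp
      have "((\<lambda>t. w i t - vbar) has_vector_derivative r i t) (at t within {a..T})"
        using w_deriv[OF i t] by (intro derivative_eq_intros) auto
      then show "((\<lambda>t. (norm (w i t - vbar))\<^sup>2) has_real_derivative 2 * inner (w i t - vbar) (r i t)) (at t within {a..T})"
        by (rule deriv_sqnorm)
    qed
    then show ?thesis unfolding En_def En'_def sqnormN_def by (rule DERIV_cdivide)
  qed
  have En'_le: "t \<in> {a..T} \<Longrightarrow> En' t \<le> - 2 * k * En t" for t
  proof -
    assume t: "t \<in> {a..T}"
    have dis: "(\<Sum>i<N. inner (w i t - vbar) (\<Sum>j<N. \<Psi> (y i t) (y j t) *\<^sub>R clip R (w j t - w i t))) \<le> 0"
      by (rule dissip) (use sym bnd R in auto)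
    have "(\<Sum>i<N. 2 * inner (w i t - vbar) (r i t))
       = 2 / real N * (\<Sum>i<N. inner (w i t - vbar) (\<Sum>j<N. \<Psi> (y i t) (y j t) *\<^sub>R clip R (w j t - w i t)))
         - 2 * k * (\<Sum>i<N. (norm (w i t - vbar))\<^sup>2)"
    proof -
      have pt: "2 * inner d ((1 / real N) *\<^sub>R X - k *\<^sub>R d) = 2 / real N * inner d X - 2 * k * (norm d)\<^sup>2"
        for d X :: 'a by (simp add: inner_diff_right power2_norm_eq_inner)
      have "(\<Sum>i<N. 2 * inner (w i t - vbar) (r i t))
         = (\<Sum>i<N. 2 / real N * inner (w i t - vbar) (\<Sum>j<N. \<Psi> (y i t) (y j t) *\<^sub>R clip R (w j t - w i t))
             - 2 * k * (norm (w i t - vbar))\<^sup>2)"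
        unfolding r_def pt by simp
      then show ?thesis by (simp add: sum_subtractf sum_distrib_left)
    qed
    also have "\<dots> \<le> - 2 * k * (\<Sum>i<N. (norm (w i t - vbar))\<^sup>2)"
    proof -
      have "2 / real N * (\<Sum>i<N. inner (w i t - vbar) (\<Sum>j<N. \<Psi> (y i t) (y j t) *\<^sub>R clip R (w j t - w i t))) \<le> 0"
        using dis by (intro mult_nonneg_nonpos) auto
      then show ?thesis by linarith
    qed
    finally have X: "(\<Sum>i<N. 2 * inner (w i t - vbar) (r i t)) \<le> - 2 * k * (\<Sum>i<N. (norm (w i t - vbar))\<^sup>2)" .
    have "(\<Sum>i<N. 2 * inner (w i t - vbar) (r i t)) / real N \<le> (- 2 * k * (\<Sum>i<N. (norm (w i t - vbar))\<^sup>2)) / real N"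
      by (rule divide_right_mono[OF X]) simp
    then show ?thesis unfolding En'_def En_def sqnormN_def by (simp only: times_divide_eq_right)
  qed
  have ftc: "t \<in> {a..T} \<Longrightarrow> (En' has_integral (En t - En a)) {a..t}" for t
  proof -
    assume t: "t \<in> {a..T}"
    show ?thesis
    proof (rule fundamental_theorem_of_calculus)
      show "a \<le> t" using t by simp
      fix s assume s: "s \<in> {a..t}"
      then have s': "s \<in> {a..T}" using t by auto
      show "(En has_vector_derivative En' s) (at s within {a..t})"
        using has_vector_derivative_within_subset[OF En_deriv[OF s', unfolded has_real_derivative_iff_has_vector_derivative]] t
        by auto
    qed
  qed
  have En_le: "t \<in> {a..T} \<Longrightarrow> En t \<le> E0" for t
  proof -
    assume t: "t \<in> {a..T}"
    have "En t - En a \<le> 0"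
    proof (rule has_integral_le[OF ftc[OF t] has_integral_0])
      fix s assume s: "s \<in> {a..t}"
      then have s': "s \<in> {a..T}" using t by auto
      have "0 \<le> 2 * k * En s" using k En_nonneg[of s] by simp
      then show "En' s \<le> 0" using En'_le[OF s'] by linarith
    qed
    then show ?thesis using En_a by simp
  qed
  have wbound: "i < N \<Longrightarrow> t \<in> {a..T} \<Longrightarrow> norm (w i t - vbar) \<le> sqrt (real N * E0)" for i t
  proof -
    assume i: "i < N" and t: "t \<in> {a..T}"
    have "(norm (w i t - vbar))\<^sup>2 \<le> (\<Sum>j<N. (norm (w j t - vbar))\<^sup>2)"
      using i by (intro member_le_sum) auto
    also have "\<dots> = real N * En t" using N by (simp add: En_def sqnormN_def)
    also have "\<dots> \<le> real N * E0" using En_le[OF t] by (simp add: mult_left_mono)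
    finally show ?thesis by (simp add: real_le_rsqrt)
  qed
  have r_rho: "i < N \<Longrightarrow> t \<in> {a..T} \<Longrightarrow> r i t = \<rho> i t" for i t
  proof -
    assume i: "i < N" and t: "t \<in> {a..T}"
    have "clip R (w j t - w i t) = w j t - w i t" if j: "j < N" for j
    proof (rule clip_id)
      have "norm (w j t - w i t) \<le> norm (w j t - vbar) + norm (w i t - vbar)"
        using norm_triangle_ineq4[of "w j t - vbar" "w i t - vbar"] by simp
      also have "\<dots> \<le> R" using wbound[OF j t] wbound[OF i t] by (simp add: R_def)
      finally show "norm (w j t - w i t) \<le> R" .
    qed
    then show ?thesis by (simp add: r_def \<rho>_def)
  qed
  have cost: "integral {a..T} (\<lambda>t. 2 * En t) \<le> (1/k) * E0"
  proof -
    have i1: "((\<lambda>t. 2 * En t) has_integral integral {a..T} (\<lambda>t. 2 * En t)) {a..T}"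
      by (intro integrable_integral integrable_continuous_interval continuous_intros En_cont)
    have i2: "((\<lambda>t. - (1/k) * En' t) has_integral - (1/k) * (En T - En a)) {a..T}"
      by (intro has_integral_mult_right ftc) (use aT in auto)
    have "integral {a..T} (\<lambda>t. 2 * En t) \<le> - (1/k) * (En T - En a)"
    proof (rule has_integral_le[OF i1 i2])
      fix t assume t: "t \<in> {a..T}"
      show "2 * En t \<le> - (1/k) * En' t" using En'_le[OF t] k by (simp add: field_simps)
    qed
    also have "\<dots> \<le> (1/k) * E0" using En_nonneg[of T] En_a k by (simp add: field_simps)
    finally show ?thesis .
  qed
  have cont_rho: "i < N \<Longrightarrow> continuous_on {a..T} (\<rho> i)" for i
    using continuous_on_eq[OF rc[of i]] r_rho[of i] by simp
  have rho_int: "i < N \<Longrightarrow> t \<in> {a..T} \<Longrightarrow> (\<rho> i has_integral (w i t - w i a)) {a..t}" for i t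
  proof -
    assume i: "i < N" and t: "t \<in> {a..T}"
    have "s \<in> {a..t} \<Longrightarrow> r i s = \<rho> i s" for s using r_rho[OF i, of s] t by auto
    then show ?thesis using r_int[OF i t] has_integral_cong[of "{a..t}" "r i" "\<rho> i"] by simp
  qed
  have cost': "integral {a..T} (\<lambda>t. 2 * sqnormN N (\<lambda>i. w i t - vbar)) \<le> (1/k) * sqnormN N (\<lambda>i. vin i - vbar)"
    using cost by (simp add: En_def E0_def)
  show ?thesis
    apply (rule exI[of _ y], rule exI[of _ w])
    using ya wa yc wc cont_rho w_int rho_int cost' unfolding \<rho>_def[abs_def] by blast
qed

lemma traj_cont:
  assumes tr: "is_trajectory \<Psi> N f a T x0 v0 x v" and i: "i < N"
  shows "continuous_on {a..T} (x i)" "continuous_on {a..T} (v i)"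
proof -
  have vi: "v i integrable_on {a..T}" and ci: "cs_rhs \<Psi> N f x v i integrable_on {a..T}"
    using tr i unfolding is_trajectory_def absolutely_integrable_on_def by blast+
  have "continuous_on {a..T} (\<lambda>t. x i a + integral {a..t} (v i))"
    by (intro continuous_intros indefinite_integral_continuous_1 vi)
  moreover have "t \<in> {a..T} \<Longrightarrow> x i a + integral {a..t} (v i) = x i t" for t
  proof -
    assume t: "t \<in> {a..T}"
    have "(v i has_integral (x i t - x i a)) {a..t}" using tr i t unfolding is_trajectory_def by blast
    then show ?thesis by (simp add: integral_unique)
  qed
  ultimately show "continuous_on {a..T} (x i)" using continuous_on_eq by blast
  have "continuous_on {a..T} (\<lambda>t. v i a + integral {a..t} (cs_rhs \<Psi> N f x v i))"
    by (intro continuous_intros indefinite_integral_continuous_1 ci)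
  moreover have "t \<in> {a..T} \<Longrightarrow> v i a + integral {a..t} (cs_rhs \<Psi> N f x v i) = v i t" for t
  proof -
    assume t: "t \<in> {a..T}"
    have "(cs_rhs \<Psi> N f x v i has_integral (v i t - v i a)) {a..t}" using tr i t unfolding is_trajectory_def by blast
    then show ?thesis by (simp add: integral_unique)
  qed
  ultimately show "continuous_on {a..T} (v i)" using continuous_on_eq by blast
qed

lemma cost_integrable:
  fixes \<Psi> :: "'a::euclidean_space \<Rightarrow> 'a \<Rightarrow> real"
  assumes adm: "admissible CB a T f" and tr: "is_trajectory \<Psi> N f a T x0 v0 x v"
    and PsiC: "continuous_on UNIV (\<lambda>p. \<Psi> (fst p) (snd p))" and N: "N \<ge> 1"
  shows "(\<lambda>t. sqnormN N (\<lambda>i. v i t - vbar) + lam * sqnormN N (\<lambda>i. f t (x i t, v i t))) integrable_on {a..T}"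
proof -
  have xc: "i < N \<Longrightarrow> continuous_on {a..T} (x i)" for i using traj_cont[OF tr] by blast
  have vc: "i < N \<Longrightarrow> continuous_on {a..T} (v i)" for i using traj_cont[OF tr] by blast
  have Pc: "i < N \<Longrightarrow> j < N \<Longrightarrow> continuous_on {a..T} (\<lambda>t. \<Psi> (x i t) (x j t))" for i j
    using continuous_on_compose2[OF PsiC, of "{a..T}" "\<lambda>t. (x i t, x j t)"]
    by (auto intro: continuous_intros xc)
  define F where "F i t = f t (x i t, v i t)" for i t
  define A where "A i t = (1 / real N) *\<^sub>R (\<Sum>j<N. \<Psi> (x i t) (x j t) *\<^sub>R (v j t - v i t))" for i t
  have Ac: "i < N \<Longrightarrow> continuous_on {a..T} (A i)" for i
    unfolding A_def by (intro continuous_intros Pc vc) auto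
  have Fai: "i < N \<Longrightarrow> F i absolutely_integrable_on {a..T}" for i
  proof -
    assume i: "i < N"
    have c: "cs_rhs \<Psi> N f x v i absolutely_integrable_on {a..T}"
      using tr i unfolding is_trajectory_def by blast
    have "(\<lambda>t. cs_rhs \<Psi> N f x v i t - A i t) absolutely_integrable_on {a..T}"
      by (rule set_integral_diff(1)[OF c absolutely_integrable_continuous_real[OF Ac[OF i]]])
    then show ?thesis by (simp add: cs_rhs_def A_def F_def[abs_def])
  qed
  have Fm: "i < N \<Longrightarrow> F i \<in> borel_measurable (lebesgue_on {a..T})" for i
    by (rule absolutely_integrable_imp_borel_measurable[OF Fai]) auto
  define H where "H t = sqnormN N (\<lambda>i. F i t)" for t
  have Hm: "H \<in> borel_measurable (lebesgue_on {a..T})"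
    unfolding H_def sqnormN_def
    by (intro borel_measurable_divide borel_measurable_sum borel_measurable_power
        measurable_compose[OF Fm borel_measurable_norm] borel_measurable_const) auto
  have "compact ((\<lambda>t. \<Sum>i<N. norm (x i t, v i t)) ` {a..T})"
    by (intro compact_continuous_image continuous_intros xc vc) auto
  then obtain M where M: "\<And>t. t \<in> {a..T} \<Longrightarrow> norm (\<Sum>i<N. norm (x i t, v i t)) \<le> M"
    by (meson bounded_iff compact_imp_bounded imageI)
  have xvM: "i < N \<Longrightarrow> t \<in> {a..T} \<Longrightarrow> norm (x i t, v i t) \<le> M" for i t
  proof -
    assume i: "i < N" and t: "t \<in> {a..T}"
    have "norm (x i t, v i t) \<le> (\<Sum>i<N. norm (x i t, v i t))"
      using i by (intro member_le_sum) auto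
    also have "\<dots> \<le> M" using M[OF t] by simp
    finally show ?thesis .
  qed
  define K where "K = CB + CB * M"
  have AEb: "AE t in lebesgue_on {a..T}. norm (H t) \<le> norm (K\<^sup>2)"
    using adm unfolding admissible_def
  proof (elim conjE)
    assume ae: "AE t in lebesgue_on {a..T}. \<exists>L. norm (f t 0) + L \<le> CB \<and> L-lipschitz_on UNIV (f t)"
    show ?thesis
      using ae AE_space[of "lebesgue_on {a..T}"]
    proof (eventually_elim)
      case (elim t)
      then obtain L where L: "norm (f t 0) + L \<le> CB" "L-lipschitz_on UNIV (f t)" by blast
      have t: "t \<in> {a..T}" using elim by simp
      have L0: "L \<ge> 0" using lipschitz_on_nonneg[OF L(2)] .
      have FK: "norm (F i t) \<le> K" if i: "i < N" for i
      proof -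
        have "norm (F i t) \<le> norm (f t 0) + norm (f t (x i t, v i t) - f t 0)"
          unfolding F_def using norm_triangle_ineq[of "f t 0" "f t (x i t, v i t) - f t 0"] by simp
        also have "norm (f t (x i t, v i t) - f t 0) \<le> L * norm ((x i t, v i t) - 0)"
          by (rule lipschitz_on_normD[OF L(2)]) auto
        also have "L * norm ((x i t, v i t) - 0) \<le> CB * M"
        proof -
          have "norm (f t 0) \<ge> 0" by simp
          then have "L \<le> CB" "0 \<le> CB" using L(1) L0 by linarith+
          then show ?thesis using L0 xvM[OF i t] by (intro mult_mono) auto
        qed
        finally show ?thesis using L L0 by (simp add: K_def)
      qed
      have "H t \<le> (\<Sum>i<N. K\<^sup>2) / real N"
        unfolding H_def sqnormN_def
        by (intro divide_right_mono sum_mono power_mono FK) auto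
      also have "\<dots> = K\<^sup>2" using N by simp
      finally have "H t \<le> K\<^sup>2" .
      moreover have "H t \<ge> 0" unfolding H_def by (rule sqnormN_nonneg)
      ultimately show ?case by simp
    qed
  qed
  have "integrable (lebesgue_on {a..T}) H"
    by (rule Bochner_Integration.integrable_bound[OF Lebesgue_Measure.integrable_const_ivl Hm AEb])
  then have Hi: "H integrable_on {a..T}"
    by (rule integrable_on_lebesgue_on) auto
  have c1: "(\<lambda>t. sqnormN N (\<lambda>i. v i t - vbar)) integrable_on {a..T}"
    unfolding sqnormN_def using N by (intro integrable_continuous_interval continuous_intros vc) auto
  show ?thesis
    using integrable_add[OF c1 integrable_on_cmult_left[OF Hi, of lam]]
    by (simp add: H_def F_def)
qed

theorem lemma3p1:
  fixes \<Psi> :: "'a::euclidean_space \<Rightarrow> 'a \<Rightarrow> real"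
    and N :: nat and T lam C\<Psi> CB a :: real and vbar :: 'a
    and x0 v0 :: "nat \<Rightarrow> 'a" and fstar :: "real \<Rightarrow> 'a \<times> 'a \<Rightarrow> 'a"
    and x v :: "nat \<Rightarrow> real \<Rightarrow> 'a"
  assumes N: "N \<ge> 1" and T: "T > 0" and lam: "lam > 0"
    and Psi_lip: "\<exists>L. L-lipschitz_on UNIV (\<lambda>p. \<Psi> (fst p) (snd p))"
    and Psi_sym: "\<And>y z. \<Psi> y z = \<Psi> z y"
    and Psi_bnd: "\<And>y z. 0 \<le> \<Psi> y z \<and> \<Psi> y z \<le> C\<Psi>"
    and CB: "CB \<ge> (1 + norm vbar) / sqrt lam"
    and opt: "optimal_control \<Psi> CB lam vbar N 0 T x0 v0 fstar x v"
    and a: "a \<in> {0..T}"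
  shows "integral {a..T} (\<lambda>t. sqnormN N (\<lambda>i. v i t - vbar)
            + lam * sqnormN N (\<lambda>i. fstar t (x i t, v i t)))
         \<le> sqrt lam * sqnormN N (\<lambda>i. v i a - vbar)"
proof -
  have adm: "admissible CB 0 T fstar" and tr: "is_trajectory \<Psi> N fstar 0 T x0 v0 x v"
    and minim: "\<And>g y w. admissible CB 0 T g \<Longrightarrow> is_trajectory \<Psi> N g 0 T x0 v0 y w \<Longrightarrow>
                 cost lam vbar N fstar x v 0 T \<le> cost lam vbar N g y w 0 T"
    using opt unfolding optimal_control_def by blast+
  obtain LP where lipP: "LP-lipschitz_on UNIV (\<lambda>p. \<Psi> (fst p) (snd p))" using Psi_lip by blast
  have PsiC: "continuous_on UNIV (\<lambda>p. \<Psi> (fst p) (snd p))" by (rule lipschitz_on_continuous_on[OF lipP])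
  have a0: "0 \<le> a" "a \<le> T" using a by auto
  define k where "k = 1 / sqrt lam"
  have k: "k > 0" using lam by (simp add: k_def)
  have lamk: "lam * k\<^sup>2 = 1" using lam by (simp add: k_def power_divide)
  have invk: "1 / k = sqrt lam" by (simp add: k_def)
  define \<rho> where "\<rho> y' w' i s = (1 / real N) *\<^sub>R (\<Sum>j<N. \<Psi> (y' i s) (y' j s) *\<^sub>R (w' j s - w' i s)) - k *\<^sub>R (w' i s - vbar)"
    for y' w' :: "nat \<Rightarrow> real \<Rightarrow> 'a" and i s
  obtain y' w' where fb: "\<forall>i<N. y' i a = x i a \<and> w' i a = v i a \<and> continuous_on {a..T} (y' i) \<and> continuous_on {a..T} (w' i)
      \<and> continuous_on {a..T} (\<lambda>s. (1 / real N) *\<^sub>R (\<Sum>j<N. \<Psi> (y' i s) (y' j s) *\<^sub>R (w' j s - w' i s)) - k *\<^sub>R (w' i s - vbar))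
      \<and> (\<forall>t\<in>{a..T}. (w' i has_integral (y' i t - y' i a)) {a..t}
          \<and> ((\<lambda>s. (1 / real N) *\<^sub>R (\<Sum>j<N. \<Psi> (y' i s) (y' j s) *\<^sub>R (w' j s - w' i s)) - k *\<^sub>R (w' i s - vbar))
               has_integral (w' i t - w' i a)) {a..t})"
    and fbcost: "integral {a..T} (\<lambda>t. 2 * sqnormN N (\<lambda>i. w' i t - vbar)) \<le> (1/k) * sqnormN N (\<lambda>i. v i a - vbar)"
    using feedback_solution[OF lipP Psi_sym Psi_bnd k N a0(2), where xin="\<lambda>i. x i a" and vin="\<lambda>i. v i a" and vbar=vbar]
    by blast
  have y'a: "i < N \<Longrightarrow> y' i a = x i a" for i using fb by blast
  have w'a: "i < N \<Longrightarrow> w' i a = v i a" for i using fb by blast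
  have w'c: "i < N \<Longrightarrow> continuous_on {a..T} (w' i)" for i using fb by blast
  have rhoc: "i < N \<Longrightarrow> continuous_on {a..T} (\<rho> y' w' i)" for i using fb unfolding \<rho>_def by blast
  have w'int: "i < N \<Longrightarrow> t \<in> {a..T} \<Longrightarrow> (w' i has_integral (y' i t - y' i a)) {a..t}" for i t
    using fb by blast
  have rhoint: "i < N \<Longrightarrow> t \<in> {a..T} \<Longrightarrow> (\<rho> y' w' i has_integral (w' i t - w' i a)) {a..t}" for i t
    using fb unfolding \<rho>_def by blast
  have trx0: "i < N \<Longrightarrow> x i 0 = x0 i" for i using tr unfolding is_trajectory_def by blast
  have trv0: "i < N \<Longrightarrow> v i 0 = v0 i" for i using tr unfolding is_trajectory_def by blast
  have trvai: "i < N \<Longrightarrow> v i absolutely_integrable_on {0..T}" for i using tr unfolding is_trajectory_def by blast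
  have trcai: "i < N \<Longrightarrow> cs_rhs \<Psi> N fstar x v i absolutely_integrable_on {0..T}" for i
    using tr unfolding is_trajectory_def by blast
  have trvint: "i < N \<Longrightarrow> t \<in> {0..T} \<Longrightarrow> (v i has_integral (x i t - x i 0)) {0..t}" for i t
    using tr unfolding is_trajectory_def by blast
  have trcint: "i < N \<Longrightarrow> t \<in> {0..T} \<Longrightarrow> (cs_rhs \<Psi> N fstar x v i has_integral (v i t - v i 0)) {0..t}" for i t
    using tr unfolding is_trajectory_def by blast
  define g where "g t z = (if t < a then fstar t z else - k *\<^sub>R (snd z - vbar))" for t z
  define y where "y i t = (if t \<le> a then x i t else y' i t)" for i t
  define w where "w i t = (if t \<le> a then v i t else w' i t)" for i t
  have yeq1: "t \<le> a \<Longrightarrow> y i t = x i t" for i t by (simp add: y_def)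
  have weq1: "t \<le> a \<Longrightarrow> w i t = v i t" for i t by (simp add: w_def)
  have yeq2: "i < N \<Longrightarrow> t \<in> {a..T} \<Longrightarrow> y i t = y' i t" for i t using y'a[of i] by (auto simp: y_def)
  have weq2: "i < N \<Longrightarrow> t \<in> {a..T} \<Longrightarrow> w i t = w' i t" for i t using w'a[of i] by (auto simp: w_def)
  have cs1: "t < a \<Longrightarrow> cs_rhs \<Psi> N g y w i t = cs_rhs \<Psi> N fstar x v i t" for i t
    by (simp add: cs_rhs_def g_def yeq1 weq1)
  have cs2: "i < N \<Longrightarrow> t \<in> {a..T} \<Longrightarrow> cs_rhs \<Psi> N g y w i t = \<rho> y' w' i t" for i t
  proof -
    assume i: "i < N" and t: "t \<in> {a..T}"
    have "(\<Sum>j<N. \<Psi> (y i t) (y j t) *\<^sub>R (w j t - w i t)) = (\<Sum>j<N. \<Psi> (y' i t) (y' j t) *\<^sub>R (w' j t - w' i t))"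
      using i t by (intro sum.cong refl) (simp add: yeq2 weq2)
    moreover have "g t (y i t, w i t) = - k *\<^sub>R (w' i t - vbar)" using t i by (simp add: g_def weq2)
    ultimately show ?thesis by (simp add: cs_rhs_def \<rho>_def)
  qed
  have wint1: "i < N \<Longrightarrow> t \<in> {0..a} \<Longrightarrow> (w i has_integral (x i t - x i 0)) {0..t}" for i t
  proof -
    assume i: "i < N" and t: "t \<in> {0..a}"
    have "(v i has_integral (x i t - x i 0)) {0..t}" using trvint[OF i] t a0 by auto
    then show ?thesis using has_integral_cong[of "{0..t}" "w i" "v i"] t weq1 by auto
  qed
  have cint1: "i < N \<Longrightarrow> t \<in> {0..a} \<Longrightarrow> (cs_rhs \<Psi> N g y w i has_integral (v i t - v i 0)) {0..t}" for i t
  proof -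
    assume i: "i < N" and t: "t \<in> {0..a}"
    have "(cs_rhs \<Psi> N fstar x v i has_integral (v i t - v i 0)) {0..t}" using trcint[OF i] t a0 by auto
    moreover have "s \<in> {0..t} - {a} \<Longrightarrow> cs_rhs \<Psi> N g y w i s = cs_rhs \<Psi> N fstar x v i s" for s
      using t by (intro cs1) auto
    ultimately show ?thesis using has_integral_spike_eq[OF negligible_sing] by blast
  qed
  have traj: "is_trajectory \<Psi> N g 0 T x0 v0 y w"
    unfolding is_trajectory_def
  proof (intro allI impI conjI ballI)
    fix i assume i: "i < N"
    show "y i 0 = x0 i" using a0 trx0[OF i] by (simp add: yeq1)
    show "w i 0 = v0 i" using a0 trv0[OF i] by (simp add: weq1)
    show "w i absolutely_integrable_on {0..T}"
    proof (rule absolutely_integrable_on_combine[OF _ _ a0])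
      have "v i absolutely_integrable_on {0..a}"
        using absolutely_integrable_on_subinterval[OF trvai[OF i]] a0 by auto
      then show "w i absolutely_integrable_on {0..a}"
        by (rule absolutely_integrable_spike[OF _ negligible_empty]) (simp add: weq1)
      have "w' i absolutely_integrable_on {a..T}" by (rule absolutely_integrable_continuous_real[OF w'c[OF i]])
      then show "w i absolutely_integrable_on {a..T}"
        by (rule absolutely_integrable_spike[OF _ negligible_empty]) (simp add: weq2[OF i])
    qed
    show "cs_rhs \<Psi> N g y w i absolutely_integrable_on {0..T}"
    proof (rule absolutely_integrable_on_combine[OF _ _ a0])
      have "cs_rhs \<Psi> N fstar x v i absolutely_integrable_on {0..a}"
        using absolutely_integrable_on_subinterval[OF trcai[OF i]] a0 by auto
      then show "cs_rhs \<Psi> N g y w i absolutely_integrable_on {0..a}"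
        by (rule absolutely_integrable_spike[OF _ negligible_sing[of a]]) (simp add: cs1)
      have "\<rho> y' w' i absolutely_integrable_on {a..T}" by (rule absolutely_integrable_continuous_real[OF rhoc[OF i]])
      then show "cs_rhs \<Psi> N g y w i absolutely_integrable_on {a..T}"
        by (rule absolutely_integrable_spike[OF _ negligible_empty]) (simp add: cs2[OF i])
    qed
    fix t assume t: "t \<in> {0..T}"
    show "(w i has_integral (y i t - y i 0)) {0..t}"
    proof (cases "t \<le> a")
      case True
      then show ?thesis using wint1[OF i] t a0 by (simp add: yeq1)
    next
      case False
      have t': "t \<in> {a..T}" using False t by auto
      have "(w i has_integral (y' i t - y' i a)) {a..t}"
        using w'int[OF i t'] has_integral_cong[of "{a..t}" "w i" "w' i"] weq2[OF i] t' by auto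
      from has_integral_combine[OF a0(1) _ wint1[OF i, of a] this] a0 False
      show ?thesis by (simp add: yeq1 y_def y'a[OF i])
    qed
    show "(cs_rhs \<Psi> N g y w i has_integral (w i t - w i 0)) {0..t}"
    proof (cases "t \<le> a")
      case True
      then show ?thesis using cint1[OF i] t a0 by (simp add: weq1)
    next
      case False
      have t': "t \<in> {a..T}" using False t by auto
      have "(cs_rhs \<Psi> N g y w i has_integral (w' i t - w' i a)) {a..t}"
        using rhoint[OF i t'] has_integral_cong[of "{a..t}" "cs_rhs \<Psi> N g y w i" "\<rho> y' w' i"] cs2[OF i] t' by auto
      from has_integral_combine[OF a0(1) _ cint1[OF i, of a] this] a0 False
      show ?thesis by (simp add: weq1 w_def w'a[OF i])
    qed
  qed
  have admg: "admissible CB 0 T g"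
    unfolding admissible_def
  proof (intro conjI allI)
    fix z
    have fm: "(\<lambda>t. fstar t z) \<in> borel_measurable (lebesgue_on {0..T})"
      using adm unfolding admissible_def by blast
    have idm: "(\<lambda>t::real. t) \<in> borel_measurable (lebesgue_on {0..T})"
      by (rule continuous_imp_measurable_on_sets_lebesgue) (auto intro: continuous_intros)
    have S: "{t \<in> space (lebesgue_on {0..T}). t < a} \<in> sets (lebesgue_on {0..T})"
      using borel_measurable_less[OF idm borel_measurable_const[of a]] by simp
    show "(\<lambda>t. g t z) \<in> borel_measurable (lebesgue_on {0..T})"
      unfolding g_def by (rule measurable_If[OF fm borel_measurable_const S])
  next
    have ae: "AE t in lebesgue_on {0..T}. \<exists>L. norm (fstar t 0) + L \<le> CB \<and> L-lipschitz_on UNIV (fstar t)"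
      using adm unfolding admissible_def by blast
    show "AE t in lebesgue_on {0..T}. \<exists>L. norm (g t 0) + L \<le> CB \<and> L-lipschitz_on UNIV (g t)"
      using ae
    proof (rule eventually_mono)
      fix t assume P: "\<exists>L. norm (fstar t 0) + L \<le> CB \<and> L-lipschitz_on UNIV (fstar t)"
      show "\<exists>L. norm (g t 0) + L \<le> CB \<and> L-lipschitz_on UNIV (g t)"
      proof (cases "t < a")
        case True
        then have "g t = fstar t" by (simp add: g_def fun_eq_iff)
        then show ?thesis using P by simp
      next
        case False
        then have gt: "g t = (\<lambda>z. - k *\<^sub>R (snd z - vbar))" by (simp add: g_def fun_eq_iff)
        have "norm (g t 0) + k = k * (1 + norm vbar)" using k by (simp add: gt algebra_simps)
        also have "\<dots> = (1 + norm vbar) / sqrt lam" by (simp add: k_def)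
        also have "\<dots> \<le> CB" by (rule CB)
        finally have c1: "norm (g t 0) + k \<le> CB" .
        have c2: "k-lipschitz_on UNIV (g t)"
        proof (rule lipschitz_onI)
          fix z1 z2 :: "'a \<times> 'a"
          have "dist (g t z1) (g t z2) = k * norm (snd z1 - snd z2)"
            using k by (simp add: gt dist_norm norm_minus_commute flip: scaleR_diff_right)
          also have "norm (snd z1 - snd z2) \<le> dist z1 z2"
            by (metis dist_norm dist_snd_le)
          finally show "dist (g t z1) (g t z2) \<le> k * dist z1 z2" using k by (simp add: mult_left_mono)
        qed (use k in simp)
        show ?thesis using c1 c2 by blast
      qed
    qed
  qed
  have costle: "cost lam vbar N fstar x v 0 T \<le> cost lam vbar N g y w 0 T"
    by (rule minim[OF admg traj])
  define Jf where "Jf t = sqnormN N (\<lambda>i. v i t - vbar) + lam * sqnormN N (\<lambda>i. fstar t (x i t, v i t))" for t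
  define Jg where "Jg t = sqnormN N (\<lambda>i. w i t - vbar) + lam * sqnormN N (\<lambda>i. g t (y i t, w i t))" for t
  define E' where "E' t = sqnormN N (\<lambda>i. w' i t - vbar)" for t
  have Jfi: "Jf integrable_on {0..T}"
    unfolding Jf_def[abs_def] by (rule cost_integrable[OF adm tr PsiC N])
  have Jfg: "t \<in> {0..a} - {a} \<Longrightarrow> Jg t = Jf t" for t
    by (simp add: Jg_def Jf_def yeq1 weq1 g_def)
  have Jf0a: "Jf integrable_on {0..a}" using integrable_on_subinterval[OF Jfi] a0 by auto
  have Jg0a: "Jg integrable_on {0..a}" by (rule integrable_spike[OF Jf0a negligible_sing Jfg])
  have Jg0a_eq: "integral {0..a} Jg = integral {0..a} Jf" using integral_spike[where S="{a}" and T="{0..a}" and g=Jg and f=Jf, OF negligible_sing Jfg] by simp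
  have JgE: "t \<in> {a..T} \<Longrightarrow> Jg t = 2 * E' t" for t
  proof -
    assume t: "t \<in> {a..T}"
    have "sqnormN N (\<lambda>i. w i t - vbar) = E' t"
    proof -
      have "(\<Sum>i<N. (norm (w i t - vbar))\<^sup>2) = (\<Sum>i<N. (norm (w' i t - vbar))\<^sup>2)"
        using t by (intro sum.cong refl) (simp add: weq2)
      then show ?thesis unfolding sqnormN_def E'_def by simp
    qed
    moreover have "sqnormN N (\<lambda>i. g t (y i t, w i t)) = k\<^sup>2 * E' t"
    proof -
      have "(\<Sum>i<N. (norm (g t (y i t, w i t)))\<^sup>2) = (\<Sum>i<N. k\<^sup>2 * (norm (w' i t - vbar))\<^sup>2)"
      proof (intro sum.cong refl)
        fix i assume "i \<in> {..<N}"
        then have i: "i < N" by simp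
        have "g t (y i t, w i t) = - k *\<^sub>R (w' i t - vbar)" using t i by (simp add: g_def weq2)
        then show "(norm (g t (y i t, w i t)))\<^sup>2 = k\<^sup>2 * (norm (w' i t - vbar))\<^sup>2"
          using k by (simp add: power_mult_distrib)
      qed
      then show ?thesis by (simp add: sqnormN_def E'_def sum_distrib_left)
    qed
    ultimately show ?thesis using lamk by (simp add: Jg_def mult.assoc[symmetric])
  qed
  have E'c: "continuous_on {a..T} E'"
    unfolding E'_def sqnormN_def using N by (intro continuous_intros w'c) auto
  have E2i: "(\<lambda>t. 2 * E' t) integrable_on {a..T}"
    by (intro integrable_continuous_interval continuous_intros E'c)
  have JgaT: "Jg integrable_on {a..T}" by (rule integrable_eq[OF E2i]) (simp add: JgE)
  have JgaT_eq: "integral {a..T} Jg = integral {a..T} (\<lambda>t. 2 * E' t)" by (rule integral_cong) (simp add: JgE)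
  have Jgi: "Jg integrable_on {0..T}" by (rule Henstock_Kurzweil_Integration.integrable_combine[OF a0 Jg0a JgaT])
  have "cost lam vbar N fstar x v 0 T = integral {0..a} Jf + integral {a..T} Jf"
    unfolding cost_def Jf_def[symmetric] using Henstock_Kurzweil_Integration.integral_combine[OF a0 Jfi] by simp
  moreover have "cost lam vbar N g y w 0 T = integral {0..a} Jf + integral {a..T} (\<lambda>t. 2 * E' t)"
    unfolding cost_def Jg_def[symmetric] using Henstock_Kurzweil_Integration.integral_combine[OF a0 Jgi] Jg0a_eq JgaT_eq by simp
  ultimately have "integral {a..T} Jf \<le> integral {a..T} (\<lambda>t. 2 * E' t)" using costle by simp
  also have "\<dots> \<le> (1/k) * sqnormN N (\<lambda>i. v i a - vbar)" using fbcost by (simp add: E'_def)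
  finally show ?thesis by (simp add: Jf_def[abs_def] invk)
qed


end
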